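(* For $s\in(0,1]$, $U\,\mathrm{ran}\,P_s^-=\Phi_sH^2$ and $U\,\mathrm{ran}\,P_s^+=(\Phi_sH^2)^\perp$, the orthogonal complement taken in $H^2$.
   Context: $H^2$ is the Hardy space of the unit disc $\mathbb{D}$, $k_\alpha(z)=\frac{1}{1-\bar\alpha z}$. The Sarason transform $U$ is the unique unitary operator from $L^2([0,1])$ onto $H^2$ with $U(x^n)=\frac{1}{n+1}k_{\frac{n}{n+1}}$ for integers $n\ge0$. For $s\in[0,1]$, $P_s^-f=\chi_{[0,s]}f$ and $P_s^+f=\chi_{[s,1]}f$ are orthogonal projections on $L^2([0,1])$. For $s\in(0,1]$, $\Phi_s(z)=e^{\frac12\ln s\,\frac{1+z}{1-z}}$, a singular inner function. *)

theory Defs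
  imports "HOL-Analysis.Analysis"
begin

text \<open>Functions are represented as maps
complex => complex that are holomorphic on the open unit disc and, as a
normalisation, vanish outside it.\<close>

definition h2_coeff :: "(complex \<Rightarrow> complex) \<Rightarrow> nat \<Rightarrow> complex" where
  "h2_coeff f n = (deriv ^^ n) f 0 / of_nat (fact n)"

definition H2 :: "(complex \<Rightarrow> complex) set" where
  "H2 = {f. f holomorphic_on ball 0 1 \<and> (\<forall>z. z \<notin> ball 0 1 \<longrightarrow> f z = 0)
            \<and> summable (\<lambda>n. (norm (h2_coeff f n))\<^sup>2)}"

definition h2_inner :: "(complex \<Rightarrow> complex) \<Rightarrow> (complex \<Rightarrow> complex) \<Rightarrow> complex" where
  "h2_inner f g = (\<Sum>n. h2_coeff f n * cnj (h2_coeff g n))"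

definition h2_norm :: "(complex \<Rightarrow> complex) \<Rightarrow> real" where
  "h2_norm f = sqrt (\<Sum>n. (norm (h2_coeff f n))\<^sup>2)"

definition kernel :: "complex \<Rightarrow> complex \<Rightarrow> complex" where
  "kernel \<alpha> z = (if z \<in> ball 0 1 then 1 / (1 - cnj \<alpha> * z) else 0)"

definition L2 :: "(real \<Rightarrow> complex) set" where
  "L2 = {f. f \<in> borel_measurable borel \<and> set_integrable lborel {0..1} (\<lambda>x. (norm (f x))\<^sup>2)}"

definition l2_norm :: "(real \<Rightarrow> complex) \<Rightarrow> real" where
  "l2_norm f = sqrt (LINT x:{0..1}|lborel. (norm (f x))\<^sup>2)"

definition Pminus :: "real \<Rightarrow> (real \<Rightarrow> complex) \<Rightarrow> (real \<Rightarrow> complex)" where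
  "Pminus s f = (\<lambda>x. indicator {0..s} x * f x)"

definition Pplus :: "real \<Rightarrow> (real \<Rightarrow> complex) \<Rightarrow> (real \<Rightarrow> complex)" where
  "Pplus s f = (\<lambda>x. indicator {s..1} x * f x)"

definition Phi :: "real \<Rightarrow> complex \<Rightarrow> complex" where
  "Phi s z = exp (complex_of_real (ln s / 2) * ((1 + z) / (1 - z)))"

definition sarason_transform :: "((real \<Rightarrow> complex) \<Rightarrow> (complex \<Rightarrow> complex)) \<Rightarrow> bool" where
  "sarason_transform U \<longleftrightarrow>
     (\<forall>f\<in>L2. \<forall>g\<in>L2. U (\<lambda>x. f x + g x) = (\<lambda>z. U f z + U g z)) \<and>
     (\<forall>f\<in>L2. \<forall>c. U (\<lambda>x. c * f x) = (\<lambda>z. c * U f z)) \<and>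
     (\<forall>f\<in>L2. h2_norm (U f) = l2_norm f) \<and>
     U ` L2 = H2 \<and>
     (\<forall>n::nat. U (\<lambda>x. (complex_of_real x) ^ n)
        = (\<lambda>z. (1 / of_nat (n + 1)) * kernel (of_real (real n / real (n + 1))) z))"

end

theory Submission
  imports Defs "HOL-Complex_Analysis.Complex_Analysis"
begin

lemma H2_holo: "h \<in> H2 \<Longrightarrow> h holomorphic_on ball 0 1"
  by (simp add: H2_def)
lemma H2_out: "h \<in> H2 \<Longrightarrow> z \<notin> ball 0 1 \<Longrightarrow> h z = 0"
  by (simp add: H2_def)
lemma H2_summable: "h \<in> H2 \<Longrightarrow> summable (\<lambda>n. (norm (h2_coeff h n))\<^sup>2)"
  by (simp add: H2_def)

lemma h2_coeff_lin:
  assumes "h holomorphic_on ball 0 1" "g holomorphic_on ball 0 1"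
  shows "h2_coeff (\<lambda>z. h z + c * g z) n = h2_coeff h n + c * h2_coeff g n"
proof -
  have "(deriv ^^ n) (\<lambda>z. h z + c * g z) 0 = (deriv ^^ n) h 0 + (deriv ^^ n) (\<lambda>z. c * g z) 0"
    by (rule higher_deriv_add) (auto intro!: holomorphic_intros assms)
  also have "(deriv ^^ n) (\<lambda>z. c * g z) 0 = c * (deriv ^^ n) g 0"
    by (rule higher_deriv_cmult[OF assms(2)]) auto
  finally show ?thesis by (simp add: h2_coeff_def add_divide_distrib)
qed

lemma sq_sum_le: "((u::real) + v)\<^sup>2 \<le> 2 * u\<^sup>2 + 2 * v\<^sup>2"
proof -
  have "0 \<le> (u - v)\<^sup>2" by simp
  moreover have "(u + v)\<^sup>2 = u\<^sup>2 + v\<^sup>2 + 2 * u * v" "(u - v)\<^sup>2 = u\<^sup>2 + v\<^sup>2 - 2 * u * v"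
    by (simp_all add: power2_sum power2_diff)
  ultimately show ?thesis by linarith
qed

lemma norm_sq_lin_bound:
  fixes a b c :: complex
  shows "(norm (a + c * b))\<^sup>2 \<le> 2 * (norm a)\<^sup>2 + 2 * (norm c)\<^sup>2 * (norm b)\<^sup>2"
proof -
  have "norm (a + c * b) \<le> norm a + norm c * norm b"
    by (metis norm_mult norm_triangle_ineq)
  hence "(norm (a + c * b))\<^sup>2 \<le> (norm a + norm c * norm b)\<^sup>2"
    by (simp add: power_mono)
  also have "\<dots> \<le> 2 * (norm a)\<^sup>2 + 2 * (norm c * norm b)\<^sup>2"
    by (rule sq_sum_le)
  finally show ?thesis by (simp add: power_mult_distrib)
qed

lemma dummy_end_marker: True by simp

lemma H2_lin:
  assumes "h \<in> H2" "g \<in> H2"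
  shows "(\<lambda>z. h z + c * g z) \<in> H2"
proof -
  have s: "summable (\<lambda>n. 2 * (norm (h2_coeff h n))\<^sup>2 + 2 * (norm c)\<^sup>2 * (norm (h2_coeff g n))\<^sup>2)"
    using H2_summable[OF assms(1)] H2_summable[OF assms(2)]
    by (intro summable_add summable_mult) auto
  show ?thesis unfolding H2_def
  proof (intro CollectI conjI allI impI)
    show "(\<lambda>z. h z + c * g z) holomorphic_on ball 0 1"
      using H2_holo[OF assms(1)] H2_holo[OF assms(2)] by (auto intro!: holomorphic_intros)
    show "h z + c * g z = 0" if "z \<notin> ball 0 1" for z
      using H2_out[OF assms(1) that] H2_out[OF assms(2) that] by simp
    show "summable (\<lambda>n. (norm (h2_coeff (\<lambda>z. h z + c * g z) n))\<^sup>2)"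
      unfolding h2_coeff_lin[OF H2_holo[OF assms(1)] H2_holo[OF assms(2)]]
      by (rule summable_comparison_test[OF _ s]) (auto intro!: exI[of _ 0] norm_sq_lin_bound)
  qed
qed

lemma H2_series:
  assumes "h \<in> H2" "z \<in> ball 0 1"
  shows "(\<lambda>n. h2_coeff h n * z ^ n) sums h z"
  using holomorphic_power_series[OF H2_holo[OF assms(1)] assms(2)]
  by (simp add: h2_coeff_def)

lemma H2_zero:
  assumes "h \<in> H2" "h2_norm h = 0"
  shows "h = (\<lambda>z. 0)"
proof
  fix z
  have "(\<Sum>n. (norm (h2_coeff h n))\<^sup>2) = 0" using assms(2) unfolding h2_norm_def by simp
  hence "\<forall>n. (norm (h2_coeff h n))\<^sup>2 = 0"
    using suminf_eq_zero_iff[OF H2_summable[OF assms(1)]] by auto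
  hence c: "\<And>n. h2_coeff h n = 0" by simp
  show "h z = 0"
  proof (cases "z \<in> ball 0 1")
    case True
    from H2_series[OF assms(1) True] have "(\<lambda>n. 0) sums h z" by (simp add: c)
    thus ?thesis using sums_unique2 sums_zero by blast
  next
    case False thus ?thesis using H2_out[OF assms(1)] by simp
  qed
qed

lemma polar_pt:
  fixes a b :: complex
  shows "a * cnj b = ((norm (a + b))\<^sup>2 - (norm (a + (-1) * b))\<^sup>2
      + \<i> * (norm (a + \<i> * b))\<^sup>2 - \<i> * (norm (a + (-\<i>) * b))\<^sup>2) / 4"
proof -
  obtain p q r t where ab: "a = Complex p q" "b = Complex r t" by (metis complex.exhaust_sel)
  have e1: "(norm (a + b))\<^sup>2 = (p+r)^2 + (q+t)^2" unfolding ab cmod_power2 by simp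
  have e2: "(norm (a + (-1) * b))\<^sup>2 = (p-r)^2 + (q-t)^2" unfolding ab cmod_power2 by simp
  have e3: "(norm (a + \<i> * b))\<^sup>2 = (p-t)^2 + (q+r)^2" unfolding ab cmod_power2 by simp
  have e4: "(norm (a + (-\<i>) * b))\<^sup>2 = (p+t)^2 + (q-r)^2" unfolding ab cmod_power2 by simp
  show ?thesis unfolding e1 e2 e3 e4 unfolding ab
    by (simp add: complex_eq_iff power2_eq_square algebra_simps)
qed


definition ip :: "(real \<Rightarrow> complex) \<Rightarrow> (real \<Rightarrow> complex) \<Rightarrow> complex" where
  "ip f g = (LINT x:{0..1}|lborel. f x * cnj (g x))"

lemma measurable_cnj [measurable]:
  "g \<in> borel_measurable M \<Longrightarrow> (\<lambda>x. cnj (g x)) \<in> borel_measurable M"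
  by (rule borel_measurable_continuous_on[of cnj]) (auto intro: continuous_intros)

lemma L2_meas: "f \<in> L2 \<Longrightarrow> f \<in> borel_measurable lborel"
  by (simp add: L2_def)
lemma L2_sq: "f \<in> L2 \<Longrightarrow> set_integrable lborel {0..1} (\<lambda>x. (norm (f x))\<^sup>2)"
  by (simp add: L2_def)

lemma L2_lin:
  assumes f: "f \<in> L2" and g: "g \<in> L2"
  shows "(\<lambda>x. f x + c * g x) \<in> L2"
proof -
  have [measurable]: "f \<in> borel_measurable borel" "g \<in> borel_measurable borel"
    using f g by (auto simp: L2_def)
  have "set_integrable lborel {0..1} (\<lambda>x. 2 * (norm (f x))\<^sup>2 + 2 * (norm c)\<^sup>2 * (norm (g x))\<^sup>2)"
    using L2_sq[OF f] L2_sq[OF g] by (intro set_integral_add set_integrable_mult_right) auto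
  hence "set_integrable lborel {0..1} (\<lambda>x. (norm (f x + c * g x))\<^sup>2)"
    by (rule set_integrable_bound)
       (auto simp: set_borel_measurable_def intro!: AE_I2 norm_sq_lin_bound)
  thus ?thesis unfolding L2_def by auto
qed

lemma L2_mult:
  assumes f: "f \<in> L2" and [measurable]: "g \<in> borel_measurable borel"
    and B: "\<And>x. x \<in> {0..1} \<Longrightarrow> norm (g x) \<le> B"
  shows "(\<lambda>x. g x * f x) \<in> L2"
proof -
  have [measurable]: "f \<in> borel_measurable borel"
    using f by (auto simp: L2_def)
  have "set_integrable lborel {0..1} (\<lambda>x. B\<^sup>2 * (norm (f x))\<^sup>2)"
    using L2_sq[OF f] by auto
  hence "set_integrable lborel {0..1} (\<lambda>x. (norm (g x * f x))\<^sup>2)"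
  proof (rule set_integrable_bound)
    show "set_borel_measurable lborel {0..1} (\<lambda>x. (norm (g x * f x))\<^sup>2)"
      by (auto simp: set_borel_measurable_def)
    show "AE x in lborel. x \<in> {0..1} \<longrightarrow> norm ((norm (g x * f x))\<^sup>2) \<le> norm (B\<^sup>2 * (norm (f x))\<^sup>2)"
    proof (intro AE_I2 impI)
      fix x :: real assume x: "x \<in> {0..1}"
      have "(norm (g x * f x))\<^sup>2 = (norm (g x))\<^sup>2 * (norm (f x))\<^sup>2" by (simp add: norm_mult power_mult_distrib)
      also have "\<dots> \<le> B\<^sup>2 * (norm (f x))\<^sup>2"
        using B[OF x] by (intro mult_right_mono power_mono) auto
      finally show "norm ((norm (g x * f x))\<^sup>2) \<le> norm (B\<^sup>2 * (norm (f x))\<^sup>2)" by simp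
    qed
  qed
  thus ?thesis unfolding L2_def by auto
qed

lemma L2_one: "(\<lambda>x. 1) \<in> L2"
  unfolding L2_def by (auto intro!: borel_integrable_atLeastAtMost')

lemma L2_cmult: "f \<in> L2 \<Longrightarrow> (\<lambda>x. c * f x) \<in> L2"
  using L2_mult[of f "\<lambda>x. c" "norm c"] by auto

lemma ip_integrable:
  assumes f: "f \<in> L2" and g: "g \<in> L2"
  shows "set_integrable lborel {0..1} (\<lambda>x. f x * cnj (g x))"
proof -
  have [measurable]: "f \<in> borel_measurable borel" "g \<in> borel_measurable borel"
    using f g by (auto simp: L2_def)
  have "set_integrable lborel {0..1} (\<lambda>x. (norm (f x))\<^sup>2 + (norm (g x))\<^sup>2)"
    using L2_sq[OF f] L2_sq[OF g] by (intro set_integral_add) auto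
  thus ?thesis
  proof (rule set_integrable_bound)
    show "set_borel_measurable lborel {0..1} (\<lambda>x. f x * cnj (g x))"
      by (auto simp: set_borel_measurable_def)
    show "AE x in lborel. x \<in> {0..1} \<longrightarrow> norm (f x * cnj (g x)) \<le> norm ((norm (f x))\<^sup>2 + (norm (g x))\<^sup>2)"
    proof (intro AE_I2 impI)
      fix x :: real
      have c: "0 \<le> (norm (f x) - norm (g x))\<^sup>2" by simp
      have "norm (f x) * norm (g x) \<le> (norm (f x))\<^sup>2 + (norm (g x))\<^sup>2"
      proof -
        have a: "0 \<le> norm (f x) * norm (g x)" by simp
        have b: "(norm (f x) - norm (g x))\<^sup>2 = (norm (f x))\<^sup>2 + (norm (g x))\<^sup>2 - 2 * (norm (f x) * norm (g x))"
          by (simp add: power2_diff)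
        show ?thesis using a b c by linarith
      qed
      thus "norm (f x * cnj (g x)) \<le> norm ((norm (f x))\<^sup>2 + (norm (g x))\<^sup>2)"
        by (simp add: norm_mult)
    qed
  qed
qed

lemma L2_integrable: "f \<in> L2 \<Longrightarrow> set_integrable lborel {0..1} f"
  using ip_integrable[OF _ L2_one, of f] by simp

lemma l2_norm_sq: "f \<in> L2 \<Longrightarrow> (l2_norm f)\<^sup>2 = (LINT x:{0..1}|lborel. (norm (f x))\<^sup>2)"
  unfolding l2_norm_def
  by (rule real_sqrt_pow2) (auto simp: set_lebesgue_integral_def intro!: integral_nonneg_AE)

lemma h2_norm_sq: "h \<in> H2 \<Longrightarrow> (h2_norm h)\<^sup>2 = (\<Sum>n. (norm (h2_coeff h n))\<^sup>2)"
  unfolding h2_norm_def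
  by (rule real_sqrt_pow2) (auto intro!: suminf_nonneg H2_summable)

lemma ip_polar:
  assumes f: "f \<in> L2" and g: "g \<in> L2"
  shows "ip f g = (complex_of_real ((l2_norm (\<lambda>x. f x + 1 * g x))\<^sup>2) - complex_of_real ((l2_norm (\<lambda>x. f x + (-1) * g x))\<^sup>2)
      + \<i> * complex_of_real ((l2_norm (\<lambda>x. f x + \<i> * g x))\<^sup>2) - \<i> * complex_of_real ((l2_norm (\<lambda>x. f x + (-\<i>) * g x))\<^sup>2)) / 4"
proof -
  define Q where "Q c = (\<lambda>x. complex_of_real ((norm (f x + c * g x))\<^sup>2))" for c
  have Qi: "set_integrable lborel {0..1} (Q c)" for c
    unfolding Q_def set_integrable_def
    using L2_sq[OF L2_lin[OF f g, of c]] unfolding set_integrable_def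
    by (simp add: complex_of_real_integrable_eq[symmetric] scaleR_conv_of_real del: of_real_power)
  have Qv: "(LINT x:{0..1}|lborel. Q c x) = complex_of_real ((l2_norm (\<lambda>x. f x + c * g x))\<^sup>2)" for c
    unfolding Q_def set_integral_complex_of_real l2_norm_sq[OF L2_lin[OF f g]] ..
  have "ip f g = (LINT x:{0..1}|lborel. (Q 1 x - Q (-1) x + \<i> * Q \<i> x - \<i> * Q (-\<i>) x) / 4)"
    unfolding ip_def Q_def by (subst polar_pt) simp
  also have "\<dots> = ((LINT x:{0..1}|lborel. Q 1 x) - (LINT x:{0..1}|lborel. Q (-1) x)
       + \<i> * (LINT x:{0..1}|lborel. Q \<i> x) - \<i> * (LINT x:{0..1}|lborel. Q (-\<i>) x)) / 4"
    using Qi by (simp add: set_integral_diff set_integral_add set_integrable_mult_right)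
  finally show ?thesis unfolding Qv .
qed

lemma h2_polar:
  assumes h: "h \<in> H2" and g: "g \<in> H2"
  shows "h2_inner h g = (complex_of_real ((h2_norm (\<lambda>x. h x + 1 * g x))\<^sup>2) - complex_of_real ((h2_norm (\<lambda>x. h x + (-1) * g x))\<^sup>2)
      + \<i> * complex_of_real ((h2_norm (\<lambda>x. h x + \<i> * g x))\<^sup>2) - \<i> * complex_of_real ((h2_norm (\<lambda>x. h x + (-\<i>) * g x))\<^sup>2)) / 4"
proof -
  define Q where "Q c = (\<lambda>n. complex_of_real ((norm (h2_coeff h n + c * h2_coeff g n))\<^sup>2))" for c
  have Qs: "summable (Q c)" for c
    unfolding Q_def
    using H2_summable[OF H2_lin[OF h g, of c]]
    unfolding h2_coeff_lin[OF H2_holo[OF h] H2_holo[OF g]]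
    by (simp only: summable_complex_of_real)
  have Qv: "(\<Sum>n. Q c n) = complex_of_real ((h2_norm (\<lambda>x. h x + c * g x))\<^sup>2)" for c
  proof -
    have "summable (\<lambda>n. (norm (h2_coeff h n + c * h2_coeff g n))\<^sup>2)"
      using H2_summable[OF H2_lin[OF h g, of c]] by (simp add: h2_coeff_lin[OF H2_holo[OF h] H2_holo[OF g]])
    thus ?thesis unfolding Q_def h2_norm_sq[OF H2_lin[OF h g]] h2_coeff_lin[OF H2_holo[OF h] H2_holo[OF g]]
      by (rule suminf_of_real[symmetric])
  qed
  have "h2_inner h g = (\<Sum>n. (Q 1 n - Q (-1) n + \<i> * Q \<i> n - \<i> * Q (-\<i>) n) / 4)"
    unfolding h2_inner_def Q_def by (subst polar_pt) simp
  also have "\<dots> = ((\<Sum>n. Q 1 n) - (\<Sum>n. Q (-1) n) + \<i> * (\<Sum>n. Q \<i> n) - \<i> * (\<Sum>n. Q (-\<i>) n)) / 4"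
    by (rule sums_unique[symmetric]) (intro sums_divide sums_diff sums_add sums_mult summable_sums Qs)
  finally show ?thesis unfolding Qv .
qed


lemma kernel_deriv:
  fixes \<alpha> :: complex
  assumes a: "norm \<alpha> < 1"
  shows "\<forall>z\<in>ball 0 1. (deriv ^^ n) (kernel \<alpha>) z = fact n * cnj \<alpha> ^ n / (1 - cnj \<alpha> * z) ^ Suc n"
proof (induction n)
  case 0
  show ?case by (simp add: kernel_def)
next
  case (Suc n)
  show ?case
  proof
    fix z :: complex assume z: "z \<in> ball 0 1"
    define c where "c = cnj \<alpha>"
    have nz: "1 - c * w \<noteq> 0" if "w \<in> ball 0 1" for w
    proof
      assume "1 - c * w = 0"
      hence "c * w = 1" by simp
      hence "norm c * norm w = 1" by (metis norm_mult norm_one)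
      moreover have "norm c < 1" using a by (simp add: c_def)
      moreover have "norm w < 1" using that by simp
      ultimately show False
        by (metis less_eq_real_def mult_le_one mult_nonneg_nonneg norm_ge_zero not_less_iff_gr_or_eq mult_strict_mono' zero_less_one)
    qed
    have ev: "eventually (\<lambda>w. (deriv ^^ n) (kernel \<alpha>) w = fact n * c ^ n / (1 - c * w) ^ Suc n) (nhds z)"
      using eventually_nhds_in_open[OF open_ball z] Suc.IH by (auto elim!: eventually_mono simp: c_def)
    define q where "q = 1 - c * z"
    have q: "q \<noteq> 0" using nz[OF z] by (simp add: q_def)
    have l: "((\<lambda>w. 1 - c * w) has_field_derivative (- c)) (at z)"
      by (auto intro!: derivative_eq_intros)
    have gD: "((\<lambda>w. (1 - c * w) ^ Suc n) has_field_derivative of_nat (Suc n) * ((- c) * q ^ n)) (at z)"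
      using DERIV_power[OF l, of "Suc n"] by (simp add: q_def)
    have D0: "((\<lambda>w. fact n * c ^ n / (1 - c * w) ^ Suc n) has_field_derivative
               (0 * q ^ Suc n - fact n * c ^ n * (of_nat (Suc n) * ((- c) * q ^ n))) / (q ^ Suc n * q ^ Suc n)) (at z)"
      using DERIV_divide[OF DERIV_const gD, of "fact n * c ^ n"] q by (simp add: q_def)
    have eq: "(0 * q ^ Suc n - fact n * c ^ n * (of_nat (Suc n) * ((- c) * q ^ n))) / (q ^ Suc n * q ^ Suc n)
        = fact (Suc n) * c ^ Suc n / (1 - c * z) ^ Suc (Suc n)"
      using q unfolding q_def[symmetric] by (simp add: field_simps power_Suc)
    have D: "((\<lambda>w. fact n * c ^ n / (1 - c * w) ^ Suc n) has_field_derivative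
               fact (Suc n) * c ^ Suc n / (1 - c * z) ^ Suc (Suc n)) (at z)"
      using D0 unfolding eq .
    have "(deriv ^^ Suc n) (kernel \<alpha>) z = deriv ((deriv ^^ n) (kernel \<alpha>)) z" by simp
    also have "\<dots> = deriv (\<lambda>w. fact n * c ^ n / (1 - c * w) ^ Suc n) z"
      by (rule deriv_cong_ev[OF ev refl])
    also have "\<dots> = fact (Suc n) * c ^ Suc n / (1 - c * z) ^ Suc (Suc n)"
      by (rule DERIV_imp_deriv[OF D])
    finally show "(deriv ^^ Suc n) (kernel \<alpha>) z = fact (Suc n) * cnj \<alpha> ^ Suc n / (1 - cnj \<alpha> * z) ^ Suc (Suc n)"
      by (simp add: c_def)
  qed
qed

lemma kernel_coeff:
  assumes "norm \<alpha> < 1"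
  shows "h2_coeff (kernel \<alpha>) n = cnj \<alpha> ^ n"
  using kernel_deriv[OF assms, of n] by (simp add: h2_coeff_def)

lemma kernel_H2:
  assumes a: "norm \<alpha> < 1"
  shows "kernel \<alpha> \<in> H2"
  unfolding H2_def
proof (intro CollectI conjI allI impI)
  have nz: "1 - cnj \<alpha> * w \<noteq> 0" if "w \<in> ball 0 1" for w
  proof
    assume "1 - cnj \<alpha> * w = 0"
    hence "cnj \<alpha> * w = 1" by simp
    hence "norm \<alpha> * norm w = 1" by (metis complex_mod_cnj norm_mult norm_one)
    moreover have "norm \<alpha> * norm w \<le> norm \<alpha>"
      using that by (intro mult_left_le) auto
    ultimately show False using a by linarith
  qed
  have "(\<lambda>w. 1 / (1 - cnj \<alpha> * w)) holomorphic_on ball 0 1"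
    using nz by (auto intro!: holomorphic_intros)
  thus "kernel \<alpha> holomorphic_on ball 0 1"
    by (rule holomorphic_transform) (simp add: kernel_def)
  show "kernel \<alpha> z = 0" if "z \<notin> ball 0 1" for z using that by (simp add: kernel_def)
  have "summable (\<lambda>n. ((norm \<alpha>)\<^sup>2) ^ n)"
    using a by (intro summable_geometric) (simp add: abs_square_less_1)
  thus "summable (\<lambda>n. (norm (h2_coeff (kernel \<alpha>) n))\<^sup>2)"
    by (simp add: kernel_coeff[OF a] norm_power power_mult[symmetric] mult.commute)
qed

lemma reproducing:
  assumes h: "h \<in> H2" and a: "norm \<alpha> < 1"
  shows "h2_inner h (kernel \<alpha>) = h \<alpha>"
proof -
  have "(\<lambda>n. h2_coeff h n * \<alpha> ^ n) sums h \<alpha>"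
    using H2_series[OF h] a by simp
  thus ?thesis unfolding h2_inner_def kernel_coeff[OF a]
    by (simp add: sums_iff)
qed

context
  fixes U :: "(real \<Rightarrow> complex) \<Rightarrow> (complex \<Rightarrow> complex)"
  assumes U: "sarason_transform U"
begin

lemma U_H2: "f \<in> L2 \<Longrightarrow> U f \<in> H2"
  using U unfolding sarason_transform_def by blast

lemma U_surj: "h \<in> H2 \<Longrightarrow> \<exists>f\<in>L2. h = U f"
  using U unfolding sarason_transform_def by blast

lemma U_norm: "f \<in> L2 \<Longrightarrow> h2_norm (U f) = l2_norm f"
  using U unfolding sarason_transform_def by blast

lemma U_lin:
  assumes f: "f \<in> L2" and g: "g \<in> L2"
  shows "U (\<lambda>x. f x + c * g x) = (\<lambda>z. U f z + c * U g z)"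
proof -
  have "\<forall>f\<in>L2. \<forall>g\<in>L2. U (\<lambda>x. f x + g x) = (\<lambda>z. U f z + U g z)"
    using U unfolding sarason_transform_def by blast
  from this[rule_format, OF f L2_cmult[OF g, of c]]
  have "U (\<lambda>x. f x + c * g x) = (\<lambda>z. U f z + U (\<lambda>x. c * g x) z)" .
  also have "U (\<lambda>x. c * g x) = (\<lambda>z. c * U g z)"
    using U g unfolding sarason_transform_def by blast
  finally show ?thesis by simp
qed

lemma U_mono: "U (\<lambda>x. (complex_of_real x) ^ n)
        = (\<lambda>z. (1 / of_nat (n + 1)) * kernel (of_real (real n / real (n + 1))) z)"
  using U unfolding sarason_transform_def by blast

lemma U_ip:
  assumes f: "f \<in> L2" and g: "g \<in> L2"
  shows "h2_inner (U f) (U g) = ip f g"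
proof -
  have e: "h2_norm (\<lambda>x. U f x + c * U g x) = l2_norm (\<lambda>x. f x + c * g x)" for c
    using U_norm[OF L2_lin[OF f g, of c]] U_lin[OF f g, of c] by simp
  show ?thesis
    unfolding h2_polar[OF U_H2[OF f] U_H2[OF g]] ip_polar[OF f g] e ..
qed

end


lemma ae_zero_from_tails:
  fixes u :: "real \<Rightarrow> real"
  assumes ui: "integrable lborel u"
    and z: "\<And>t. (\<integral>x. indicator {t<..} x * u x \<partial>lborel) = 0"
  shows "AE x in lborel. u x = 0"
proof -
  have [measurable]: "u \<in> borel_measurable lborel" using ui by auto
  define p where "p x = max 0 (u x)" for x
  define m where "m x = max 0 (- u x)" for x
  have [measurable]: "p \<in> borel_measurable lborel" "m \<in> borel_measurable lborel"
    unfolding p_def m_def by measurable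
  have pi: "integrable lborel p" unfolding p_def using ui by auto
  have mi: "integrable lborel m" unfolding m_def using ui by auto
  have pit: "integrable lborel (\<lambda>x. indicator {t<..} x * p x)" for t
    using integrable_mult_indicator[of "{t<..}" lborel p] pi by simp
  have mit: "integrable lborel (\<lambda>x. indicator {t<..} x * m x)" for t
    using integrable_mult_indicator[of "{t<..}" lborel m] mi by simp
  have em: "emeasure (density lborel (\<lambda>x. ennreal (q x))) {t<..} = ennreal (\<integral>x. indicator {t<..} x * q x \<partial>lborel)"
    if [measurable]: "q \<in> borel_measurable lborel" and qi: "integrable lborel (\<lambda>x. indicator {t<..} x * q x)"
      and qn: "\<And>x. 0 \<le> q x" for q :: "real \<Rightarrow> real" and t :: real
  proof -
    have "emeasure (density lborel (\<lambda>x. ennreal (q x))) {t<..} = (\<integral>\<^sup>+ x. ennreal (q x) * indicator {t<..} x \<partial>lborel)"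
      by (rule emeasure_density) (auto simp: borel_open)
    also have "\<dots> = (\<integral>\<^sup>+ x. ennreal (indicator {t<..} x * q x) \<partial>lborel)"
      by (intro nn_integral_cong) (auto split: split_indicator)
    also have "\<dots> = ennreal (\<integral>x. indicator {t<..} x * q x \<partial>lborel)"
      by (rule nn_integral_eq_integral[OF qi]) (auto intro!: AE_I2 qn split: split_indicator)
    finally show ?thesis .
  qed
  have pn: "\<And>x. 0 \<le> p x" and mn: "\<And>x. 0 \<le> m x" by (auto simp: p_def m_def)
  have dens: "density lborel (\<lambda>x. ennreal (p x)) = density lborel (\<lambda>x. ennreal (m x))"
  proof (rule measure_eqI_lessThan)
    show "sets (density lborel (\<lambda>x. ennreal (p x))) = sets borel" by simp
    show "sets (density lborel (\<lambda>x. ennreal (m x))) = sets borel" by simp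
    show "emeasure (density lborel (\<lambda>x. ennreal (p x))) {t<..} < \<infinity>" for t
      unfolding em[OF _ pit pn, simplified] by simp
    show "emeasure (density lborel (\<lambda>x. ennreal (p x))) {t<..} = emeasure (density lborel (\<lambda>x. ennreal (m x))) {t<..}" for t
    proof -
      have "(\<integral>x. indicator {t<..} x * u x \<partial>lborel) = (\<integral>x. indicator {t<..} x * p x - indicator {t<..} x * m x \<partial>lborel)"
        by (intro Bochner_Integration.integral_cong) (auto simp: p_def m_def split: split_indicator)
      also have "\<dots> = (\<integral>x. indicator {t<..} x * p x \<partial>lborel) - (\<integral>x. indicator {t<..} x * m x \<partial>lborel)"
        by (rule Bochner_Integration.integral_diff[OF pit mit])
      finally have "(\<integral>x. indicator {t<..} x * p x \<partial>lborel) = (\<integral>x. indicator {t<..} x * m x \<partial>lborel)"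
        using z[of t] by simp
      thus ?thesis unfolding em[OF _ pit pn, simplified] em[OF _ mit mn, simplified] by simp
    qed
  qed
  have "AE x in lborel. ennreal (p x) = ennreal (m x)"
    by (rule sigma_finite_measure.density_unique[OF sigma_finite_lborel _ _ dens]) auto
  thus ?thesis
  proof (rule eventually_mono)
    fix x assume "ennreal (p x) = ennreal (m x)"
    hence "p x = m x" using pn mn by (simp add: ennreal_inj)
    thus "u x = 0" unfolding p_def m_def by linarith
  qed
qed


lemma int_bmult:
  fixes e :: "real \<Rightarrow> complex" and g :: "real \<Rightarrow> real"
  assumes ei: "set_integrable lborel {0..1} e" and [measurable]: "e \<in> borel_measurable borel"
    and [measurable]: "g \<in> borel_measurable borel" and B: "\<And>x. x \<in> {0..1} \<Longrightarrow> \<bar>g x\<bar> \<le> B"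
  shows "set_integrable lborel {0..1} (\<lambda>x. complex_of_real (g x) * e x)"
proof -
  have "set_integrable lborel {0..1} (\<lambda>x. complex_of_real B * e x)"
    using ei by (rule set_integrable_mult_right)
  thus ?thesis
  proof (rule set_integrable_bound)
    show "set_borel_measurable lborel {0..1} (\<lambda>x. complex_of_real (g x) * e x)"
      by (auto simp: set_borel_measurable_def)
    show "AE x in lborel. x \<in> {0..1} \<longrightarrow> norm (complex_of_real (g x) * e x) \<le> norm (complex_of_real B * e x)"
    proof (intro AE_I2 impI)
      fix x :: real assume x: "x \<in> {0..1}"
      have "\<bar>g x\<bar> * norm (e x) \<le> \<bar>B\<bar> * norm (e x)"
        using B[OF x] by (intro mult_right_mono) auto
      thus "norm (complex_of_real (g x) * e x) \<le> norm (complex_of_real B * e x)"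
        by (simp add: norm_mult)
    qed
  qed
qed

lemma moment_det_poly:
  fixes e :: "real \<Rightarrow> complex"
  assumes ei: "set_integrable lborel {0..1} e" and em[measurable]: "e \<in> borel_measurable borel"
    and mom: "\<And>n. (LINT x:{0..1}|lborel. complex_of_real (x ^ n) * e x) = 0"
    and p: "real_polynomial_function p"
  shows "(LINT x:{0..1}|lborel. complex_of_real (p x) * e x) = 0"
proof -
  obtain a N where pe: "p = (\<lambda>x. \<Sum>i\<le>N. a i * x ^ i)"
    using real_polynomial_function_imp_sum[OF p] by blast
  have ii: "set_integrable lborel {0..1} (\<lambda>x. complex_of_real (x ^ i) * e x)" for i
    by (rule int_bmult[OF ei em, of _ 1]) (auto intro!: power_le_one)
  have "(LINT x:{0..1}|lborel. complex_of_real (p x) * e x)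
      = (LINT x|lborel. (\<Sum>i\<le>N. complex_of_real (a i) * (indicator {0..1} x *\<^sub>R (complex_of_real (x ^ i) * e x))))"
    unfolding set_lebesgue_integral_def pe
    by (intro Bochner_Integration.integral_cong refl)
       (simp add: sum_distrib_right sum_distrib_left scaleR_sum_right mult_ac)
  also have "\<dots> = (\<Sum>i\<le>N. LINT x|lborel. complex_of_real (a i) * (indicator {0..1} x *\<^sub>R (complex_of_real (x ^ i) * e x)))"
    by (rule Bochner_Integration.integral_sum, rule integrable_mult_right) (use ii in \<open>simp add: set_integrable_def\<close>)
  also have "\<dots> = (\<Sum>i\<le>N. complex_of_real (a i) * (LINT x:{0..1}|lborel. complex_of_real (x ^ i) * e x))"
    unfolding set_lebesgue_integral_def by (simp only: integral_mult_right_zero)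
  also have "\<dots> = 0"
  proof -
    have mom': "\<And>n. (LINT x:{0..1}|lborel. complex_of_real x ^ n * e x) = 0" using mom by simp
    show ?thesis by (simp add: mom')
  qed
  finally show ?thesis .
qed

lemma moment_det_cont:
  fixes e :: "real \<Rightarrow> complex" and g :: "real \<Rightarrow> real"
  assumes ei: "set_integrable lborel {0..1} e" and em[measurable]: "e \<in> borel_measurable borel"
    and mom: "\<And>n. (LINT x:{0..1}|lborel. complex_of_real (x ^ n) * e x) = 0"
    and gc: "continuous_on UNIV g"
  shows "(LINT x:{0..1}|lborel. complex_of_real (g x) * e x) = 0"
proof -
  have gm[measurable]: "g \<in> borel_measurable borel" by (rule borel_measurable_continuous_onI[OF gc])
  have "bounded (g ` {0..1})"
    by (intro compact_imp_bounded compact_continuous_image continuous_on_subset[OF gc]) auto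
  then obtain B where "\<forall>y\<in>g ` {0..1}. norm y \<le> B"
    unfolding bounded_iff by blast
  hence B: "\<And>x. x \<in> {0..1} \<Longrightarrow> \<bar>g x\<bar> \<le> B" by auto
  define I where "I = (LINT x:{0..1}|lborel. complex_of_real (g x) * e x)"
  define C where "C = (LINT x:{0..1}|lborel. norm (e x))"
  have Ci: "set_integrable lborel {0..1} (\<lambda>x. norm (e x))"
    using ei by (rule set_integrable_norm)
  have bound: "norm I \<le> \<epsilon> * (\<bar>C\<bar> + 1)" if \<epsilon>: "\<epsilon> > 0" for \<epsilon>
  proof -
    obtain p where p: "real_polynomial_function p" and pg: "\<And>x. x \<in> {0..1} \<Longrightarrow> \<bar>g x - p x\<bar> < \<epsilon>"
      using Stone_Weierstrass_real_polynomial_function[of "{0..1::real}" g \<epsilon>] gc \<epsilon>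
      by (auto intro: continuous_on_subset)
    have pc: "continuous_on UNIV p"
      using p by (simp add: continuous_on_polymonial_function real_polynomial_function_eq)
    have pm[measurable]: "p \<in> borel_measurable borel" by (rule borel_measurable_continuous_onI[OF pc])
    have i1: "set_integrable lborel {0..1} (\<lambda>x. complex_of_real (g x - p x) * e x)"
      by (rule int_bmult[OF ei em, of _ \<epsilon>]) (use pg in \<open>auto simp: less_imp_le\<close>)
    have i2: "set_integrable lborel {0..1} (\<lambda>x. complex_of_real (p x) * e x)"
    proof (rule int_bmult[OF ei em, of _ "B + \<epsilon>"])
      fix x :: real assume x: "x \<in> {0..1}"
      show "\<bar>p x\<bar> \<le> B + \<epsilon>" using B[OF x] pg[OF x] by linarith
    qed simp
    have "I = (LINT x:{0..1}|lborel. complex_of_real (g x - p x) * e x + complex_of_real (p x) * e x)"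
      unfolding I_def by (simp add: algebra_simps)
    also have "\<dots> = (LINT x:{0..1}|lborel. complex_of_real (g x - p x) * e x)"
      using set_integral_add(2)[OF i1 i2] moment_det_poly[OF ei em mom p] by simp
    finally have "norm I \<le> (LINT x:{0..1}|lborel. norm (complex_of_real (g x - p x) * e x))"
      using set_integral_norm_bound[OF i1] by simp
    also have "\<dots> \<le> (LINT x:{0..1}|lborel. \<epsilon> * norm (e x))"
    proof (rule set_integral_mono)
      show "set_integrable lborel {0..1} (\<lambda>x. norm (complex_of_real (g x - p x) * e x))"
        using i1 by (rule set_integrable_norm)
      show "set_integrable lborel {0..1} (\<lambda>x. \<epsilon> * norm (e x))"
        using Ci by (rule set_integrable_mult_right)
      fix x :: real assume x: "x \<in> {0..1}"
      show "norm (complex_of_real (g x - p x) * e x) \<le> \<epsilon> * norm (e x)"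
      proof -
        have "norm (complex_of_real (g x - p x)) = \<bar>g x - p x\<bar>" by (rule norm_of_real)
        hence "norm (complex_of_real (g x - p x)) \<le> \<epsilon>" using pg[OF x] by linarith
        thus ?thesis by (simp only: norm_mult) (rule mult_right_mono, auto)
      qed
    qed
    also have "\<dots> = \<epsilon> * C" unfolding C_def by simp
    also have "\<dots> \<le> \<epsilon> * (\<bar>C\<bar> + 1)" using \<epsilon> by (intro mult_left_mono) auto
    finally show ?thesis .
  qed
  have "norm I = 0"
  proof (rule ccontr)
    assume "norm I \<noteq> 0"
    hence pos: "norm I > 0" by simp
    define \<epsilon> where "\<epsilon> = norm I / (2 * (\<bar>C\<bar> + 1))"
    have "\<epsilon> > 0" using pos by (simp add: \<epsilon>_def add_pos_nonneg)
    have "\<epsilon> * (\<bar>C\<bar> + 1) = norm I / 2"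
      unfolding \<epsilon>_def by (simp add: field_simps add_pos_nonneg)
    with bound[OF \<open>\<epsilon> > 0\<close>] have "norm I \<le> norm I / 2" by linarith
    thus False using pos by simp
  qed
  thus ?thesis unfolding I_def by simp
qed


lemma moment_det:
  fixes e :: "real \<Rightarrow> complex"
  assumes ei: "set_integrable lborel {0..1} e" and em[measurable]: "e \<in> borel_measurable borel"
    and mom: "\<And>n. (LINT x:{0..1}|lborel. complex_of_real (x ^ n) * e x) = 0"
  shows "AE x in lborel. x \<in> {0..1} \<longrightarrow> e x = 0"
proof -
  have ind: "(LINT x:{0..1}|lborel. complex_of_real (indicator {t<..} x) * e x) = 0" for t :: real
  proof -
    define G where "G i x = min 1 (max 0 (real (Suc i) * (x - t)))" for i :: nat and x :: real
    have Gc: "continuous_on UNIV (G i)" for i unfolding G_def by (intro continuous_intros)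
    have Gm[measurable]: "G i \<in> borel_measurable borel" for i by (rule borel_measurable_continuous_onI[OF Gc])
    have G0: "(LINT x:{0..1}|lborel. complex_of_real (G i x) * e x) = 0" for i
      by (rule moment_det_cont[OF ei em mom Gc])
    have Glim: "(\<lambda>i. G i x) \<longlonglongrightarrow> indicator {t<..} x" for x
    proof (cases "x \<le> t")
      case True
      have "G i x = 0" for i unfolding G_def using True
        by (simp add: mult_nonneg_nonpos)
      thus ?thesis using True by simp
    next
      case False
      hence xt: "x - t > 0" by simp
      obtain N :: nat where N: "1 / (x - t) < real N" using reals_Archimedean2 by blast
      have "eventually (\<lambda>i. G i x = indicator {t<..} x) sequentially"
        unfolding eventually_sequentially
      proof (intro exI allI impI)
        fix i assume "N \<le> i"
        hence "1 / (x - t) < real (Suc i)" using N by linarith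
        hence "1 < real (Suc i) * (x - t)" using xt by (simp add: field_simps)
        thus "G i x = indicator {t<..} x" unfolding G_def using False by simp
      qed
      thus ?thesis by (rule tendsto_eventually)
    qed
    define s where "s i x = indicator {0..1} x *\<^sub>R (complex_of_real (G i x) * e x)" for i x
    define f where "f x = indicator {0..1} x *\<^sub>R (complex_of_real (indicator {t<..} x) * e x)" for x
    define w where "w x = indicator {0..1} x *\<^sub>R norm (e x)" for x :: real
    have wi: "integrable lborel w"
      using set_integrable_norm[OF ei] unfolding w_def set_integrable_def .
    have lim: "(\<lambda>i. integral\<^sup>L lborel (s i)) \<longlonglongrightarrow> integral\<^sup>L lborel f"
    proof (rule integral_dominated_convergence[OF _ _ wi])
      show "f \<in> borel_measurable lborel" unfolding f_def by measurable
      show "s i \<in> borel_measurable lborel" for i unfolding s_def by measurable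
      show "AE x in lborel. (\<lambda>i. s i x) \<longlonglongrightarrow> f x"
        unfolding s_def f_def by (intro AE_I2 tendsto_intros Glim)
      show "AE x in lborel. norm (s i x) \<le> w x" for i
      proof (intro AE_I2)
        fix x :: real
        have "\<bar>G i x\<bar> \<le> 1" unfolding G_def by simp
        hence "\<bar>G i x\<bar> * norm (e x) \<le> norm (e x)" by (simp add: mult_left_le_one_le)
        thus "norm (s i x) \<le> w x" unfolding s_def w_def by (auto simp: norm_mult split: split_indicator)
      qed
    qed
    have "integral\<^sup>L lborel (s i) = 0" for i using G0[of i] unfolding s_def set_lebesgue_integral_def .
    hence "integral\<^sup>L lborel f = 0" using lim by (simp add: LIMSEQ_const_iff)
    thus ?thesis unfolding f_def set_lebesgue_integral_def .
  qed
  have Ji: "integrable lborel (\<lambda>x. indicator {0..1} x *\<^sub>R (complex_of_real (indicator {t<..} x) * e x))" for t :: real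
    using int_bmult[OF ei em, of "indicator {t<..}" 1] unfolding set_integrable_def by auto
  have J0: "integral\<^sup>L lborel (\<lambda>x. indicator {0..1} x *\<^sub>R (complex_of_real (indicator {t<..} x) * e x)) = 0" for t :: real
    using ind[of t] unfolding set_lebesgue_integral_def .
  have ei': "integrable lborel (\<lambda>x. indicator {0..1} x *\<^sub>R e x)" using ei unfolding set_integrable_def .
  define u where "u x = Re (indicator {0..1} x *\<^sub>R e x)" for x
  define v where "v x = Im (indicator {0..1} x *\<^sub>R e x)" for x
  have "AE x in lborel. u x = 0"
  proof (rule ae_zero_from_tails)
    show "integrable lborel u" unfolding u_def using ei' by (rule integrable_Re)
    fix t :: real
    have "(\<integral>x. indicator {t<..} x * u x \<partial>lborel) = (\<integral>x. Re (indicator {0..1} x *\<^sub>R (complex_of_real (indicator {t<..} x) * e x)) \<partial>lborel)"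
      unfolding u_def by (intro Bochner_Integration.integral_cong) (auto split: split_indicator)
    also have "\<dots> = 0" using integral_Re[OF Ji[of t]] J0[of t] by simp
    finally show "(\<integral>x. indicator {t<..} x * u x \<partial>lborel) = 0" .
  qed
  moreover have "AE x in lborel. v x = 0"
  proof (rule ae_zero_from_tails)
    show "integrable lborel v" unfolding v_def using ei' by (rule integrable_Im)
    fix t :: real
    have "(\<integral>x. indicator {t<..} x * v x \<partial>lborel) = (\<integral>x. Im (indicator {0..1} x *\<^sub>R (complex_of_real (indicator {t<..} x) * e x)) \<partial>lborel)"
      unfolding v_def by (intro Bochner_Integration.integral_cong) (auto split: split_indicator)
    also have "\<dots> = 0" using integral_Im[OF Ji[of t]] J0[of t] by simp
    finally show "(\<integral>x. indicator {t<..} x * v x \<partial>lborel) = 0" .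
  qed
  ultimately show ?thesis
    by eventually_elim (auto simp: u_def v_def complex_eq_iff)
qed


lemma powr_cont01: "(a::real) > 0 \<Longrightarrow> continuous_on {0..1} (\<lambda>x::real. x powr a)"
  by (intro continuous_on_powr') (auto intro: continuous_intros)

lemma moment_powr:
  assumes g: "(\<gamma>::real) > 0"
  shows "(LINT x:{0..1}|lborel. x ^ n * x powr \<gamma>) = 1 / (real n + \<gamma> + 1)"
proof -
  have eq: "x ^ n * x powr \<gamma> = x powr (real n + \<gamma>)" if "x \<in> {0..1}" for x :: real
  proof (cases "x = 0")
    case True thus ?thesis using g by simp
  next
    case False hence "x > 0" using that by simp
    thus ?thesis by (simp add: powr_add powr_realpow)
  qed
  have "(LINT x:{0..1}|lborel. x ^ n * x powr \<gamma>) = (LINT x:{0..1}|lborel. x powr (real n + \<gamma>))"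
    using eq by (intro set_lebesgue_integral_cong) auto
  also have "\<dots> = integral {0..1} (\<lambda>x. x powr (real n + \<gamma>))"
    by (rule set_borel_integral_eq_integral(2)) (rule borel_integrable_atLeastAtMost', rule powr_cont01, use g in simp)
  also have "\<dots> = 1 / (real n + \<gamma> + 1)"
    using has_integral_powr_from_0[of "real n + \<gamma>" 1] g by (simp add: integral_unique)
  finally show ?thesis .
qed

context
  fixes U :: "(real \<Rightarrow> complex) \<Rightarrow> (complex \<Rightarrow> complex)"
  assumes U: "sarason_transform U"
begin

lemma mono_L2: "(\<lambda>x. complex_of_real x ^ n) \<in> L2"
  using L2_mult[OF L2_one, of "\<lambda>x. complex_of_real x ^ n" 1] by (auto simp: norm_power power_le_one)

lemma U_explicit:
  assumes f: "f \<in> L2" and g: "(\<gamma>::real) > 0"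
  shows "U f (complex_of_real (\<gamma> / (\<gamma> + 1))) = (LINT x:{0..1}|lborel. f x * complex_of_real ((\<gamma> + 1) * x powr \<gamma>))"
proof -
  define \<alpha> where "\<alpha> = \<gamma> / (\<gamma> + 1)"
  have a0: "0 < \<alpha>" "\<alpha> < 1" using g by (auto simp: \<alpha>_def field_simps)
  have an: "norm (complex_of_real \<alpha>) < 1" using a0 by simp
  define k where "k = kernel (complex_of_real \<alpha>)"
  have kH: "k \<in> H2" unfolding k_def by (rule kernel_H2[OF an])
  obtain e' where e': "e' \<in> L2" and ke: "k = U e'" using U_surj[OF U kH] by blast
  have [measurable]: "e' \<in> borel_measurable borel" using e' by (simp add: L2_def)
  define q where "q x = complex_of_real ((\<gamma> + 1) * x powr \<gamma>)" for x :: real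
  have qm[measurable]: "q \<in> borel_measurable borel" unfolding q_def by measurable
  have qi: "set_integrable lborel {0..1} q"
    unfolding q_def by (rule borel_integrable_atLeastAtMost') (use powr_cont01[OF g] in \<open>auto intro!: continuous_intros\<close>)
  have s1: "U f (complex_of_real \<alpha>) = ip f e'"
    using reproducing[OF U_H2[OF U f] an] U_ip[OF U f e'] ke k_def by simp
  define e where "e x = cnj (e' x) - q x" for x
  have ci: "set_integrable lborel {0..1} (\<lambda>x. cnj (e' x))"
    using integrable_cnj[OF L2_integrable[OF e', unfolded set_integrable_def]] unfolding set_integrable_def
    by (simp add: complex_cnj_scaleR)
  have ei: "set_integrable lborel {0..1} e"
    unfolding e_def using ci qi by (rule set_integral_diff(1))
  have em: "e \<in> borel_measurable borel" unfolding e_def by measurable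
  have mom: "(LINT x:{0..1}|lborel. complex_of_real (x ^ n) * e x) = 0" for n
  proof -
    have i1: "set_integrable lborel {0..1} (\<lambda>x. complex_of_real (x ^ n) * cnj (e' x))"
      using ip_integrable[OF mono_L2[of n] e'] by simp
    have i2: "set_integrable lborel {0..1} (\<lambda>x. complex_of_real (x ^ n) * q x)"
      by (rule borel_integrable_atLeastAtMost') (use powr_cont01[OF g] in \<open>auto simp: q_def intro!: continuous_intros\<close>)
    have A: "(LINT x:{0..1}|lborel. complex_of_real (x ^ n) * cnj (e' x)) = complex_of_real ((\<gamma> + 1) / (real n + \<gamma> + 1))"
    proof -
      have "(LINT x:{0..1}|lborel. complex_of_real (x ^ n) * cnj (e' x)) = ip (\<lambda>x. complex_of_real x ^ n) e'"
        unfolding ip_def by simp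
      also have "\<dots> = h2_inner (U (\<lambda>x. complex_of_real x ^ n)) k"
        using U_ip[OF U mono_L2 e'] ke by simp
      also have "\<dots> = U (\<lambda>x. complex_of_real x ^ n) (complex_of_real \<alpha>)"
        unfolding k_def by (rule reproducing[OF U_H2[OF U mono_L2] an])
      also have "\<dots> = 1 / of_nat (n + 1) / (1 - complex_of_real (real n / real (n + 1)) * complex_of_real \<alpha>)"
        unfolding U_mono[OF U] kernel_def using an by simp
      also have "\<dots> = complex_of_real (1 / real (n + 1) / (1 - real n / real (n + 1) * \<alpha>))"
        by simp
      also have "1 / real (n + 1) / (1 - real n / real (n + 1) * \<alpha>) = (\<gamma> + 1) / (real n + \<gamma> + 1)"
      proof -
        define N where "N = real n"
        have N: "N \<ge> 0" unfolding N_def by simp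
        define P where "P = (N + 1) * (\<gamma> + 1)"
        have P: "P > 0" unfolding P_def using N g by simp
        have d1: "N / (N + 1) * (\<gamma> / (\<gamma> + 1)) = N * \<gamma> / P" by (simp add: P_def)
        have d2: "N + \<gamma> + 1 = P - N * \<gamma>" by (simp add: P_def algebra_simps)
        have d3: "(P - N * \<gamma>) / P = 1 - N * \<gamma> / P" using P by (simp add: diff_divide_distrib)
        have d: "1 - N / (N + 1) * (\<gamma> / (\<gamma> + 1)) = (N + \<gamma> + 1) / ((N + 1) * (\<gamma> + 1))"
        proof -
          have "1 - N / (N + 1) * (\<gamma> / (\<gamma> + 1)) = 1 - N * \<gamma> / P" using d1 by simp
          also have "\<dots> = (P - N * \<gamma>) / P" using d3 by simp
          also have "\<dots> = (N + \<gamma> + 1) / P" using d2 by simp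
          finally show ?thesis unfolding P_def .
        qed
        have e1: "1 / (N + 1) * ((N + 1) * (\<gamma> + 1)) = \<gamma> + 1" using N by simp
        have "1 / (N + 1) / ((N + \<gamma> + 1) / ((N + 1) * (\<gamma> + 1))) = (\<gamma> + 1) / (N + \<gamma> + 1)"
          unfolding divide_divide_eq_right e1 ..
        moreover have r: "real (n + 1) = N + 1" by (simp add: N_def)
        ultimately show ?thesis unfolding \<alpha>_def r N_def[symmetric] d by simp
      qed
      finally show ?thesis .
    qed
    have B: "(LINT x:{0..1}|lborel. complex_of_real (x ^ n) * q x) = complex_of_real ((\<gamma> + 1) / (real n + \<gamma> + 1))"
    proof -
      have "(LINT x:{0..1}|lborel. complex_of_real (x ^ n) * q x) = (LINT x:{0..1}|lborel. complex_of_real ((\<gamma> + 1) * (x ^ n * x powr \<gamma>)))"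
        unfolding q_def by (simp add: mult_ac)
      also have "\<dots> = complex_of_real ((\<gamma> + 1) * (1 / (real n + \<gamma> + 1)))"
        unfolding set_integral_complex_of_real by (simp add: moment_powr[OF g])
      finally show ?thesis by simp
    qed
    have "(LINT x:{0..1}|lborel. complex_of_real (x ^ n) * e x)
        = (LINT x:{0..1}|lborel. complex_of_real (x ^ n) * cnj (e' x) - complex_of_real (x ^ n) * q x)"
      unfolding e_def by (simp add: algebra_simps)
    also have "\<dots> = 0" using set_integral_diff(2)[OF i1 i2] A B by simp
    finally show ?thesis .
  qed
  have ae: "AE x in lborel. x \<in> {0..1} \<longrightarrow> e x = 0" by (rule moment_det[OF ei em mom])
  have "ip f e' = (LINT x:{0..1}|lborel. f x * q x)"
    unfolding ip_def
  proof (rule set_lebesgue_integral_cong_AE)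
    show "{0..1::real} \<in> sets lborel" by simp
    have fm[measurable]: "f \<in> borel_measurable borel" using f by (simp add: L2_def)
    show "(\<lambda>x. f x * cnj (e' x)) \<in> borel_measurable lborel" by measurable
    show "(\<lambda>x. f x * q x) \<in> borel_measurable lborel" by measurable
    show "AE x\<in>{0..1} in lborel. f x * cnj (e' x) = f x * q x"
      using ae by eventually_elim (auto simp: e_def)
  qed
  thus ?thesis using s1 unfolding \<alpha>_def q_def by simp
qed

end


definition Wd :: "real \<Rightarrow> (real \<Rightarrow> complex) \<Rightarrow> real \<Rightarrow> complex" where
  "Wd s f x = complex_of_real (indicator {0..s} x / sqrt s) * f (x / s)"

definition Dl :: "real \<Rightarrow> (real \<Rightarrow> complex) \<Rightarrow> real \<Rightarrow> complex" where
  "Dl s g y = complex_of_real (sqrt s) * g (s * y)"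

lemma ind_scale:
  fixes s x y :: real
  assumes s: "s > 0"
  shows "indicator {0..1} (x / s) = (indicator {0..s} x :: real)"
    and "indicator {0..s} (s * y) = (indicator {0..1} y :: real)"
proof -
  have "(x / s \<in> {0..1}) = (x \<in> {0..s})" using s by (auto simp: divide_le_eq le_divide_eq)
  thus "indicator {0..1} (x / s) = (indicator {0..s} x :: real)" by (simp add: indicator_def)
  have "(s * y \<in> {0..s}) = (y \<in> {0..1})" using s by (auto simp: zero_le_mult_iff mult_le_cancel_left1)
  thus "indicator {0..s} (s * y) = (indicator {0..1} y :: real)" by (simp add: indicator_def)
qed

lemma Wd_Dl:
  assumes s: "s > 0"
  shows "Wd s (Dl s g) = Pminus s g"
proof
  fix x
  have "sqrt s \<noteq> 0" using s by simp
  thus "Wd s (Dl s g) x = Pminus s g x"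
    unfolding Wd_def Dl_def Pminus_def using s
    by (auto simp: indicator_def)
qed

lemma Pminus_idem: "Pminus s (Pminus s f) = Pminus s f"
  unfolding Pminus_def by (auto simp: indicator_def)

lemma Wd_Pminus: "Pminus s (Wd s f) = Wd s f"
  unfolding Pminus_def Wd_def by (auto simp: indicator_def)

lemma Wd_L2:
  assumes s: "0 < s" "s \<le> 1" and f: "f \<in> L2"
  shows "Wd s f \<in> L2"
proof -
  have fm[measurable]: "f \<in> borel_measurable borel" using f by (simp add: L2_def)
  define F where "F y = indicator {0..1} y * (norm (f y))\<^sup>2" for y :: real
  have Fi: "integrable lborel F" using L2_sq[OF f] unfolding F_def set_integrable_def by simp
  have "integrable lborel (\<lambda>x. F (0 + (1 / s) * x))"
    using s by (subst lborel_integrable_real_affine_iff) (auto simp: Fi)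
  hence "integrable lborel (\<lambda>x. (1 / s) * F (0 + (1 / s) * x))" by (rule integrable_mult_right)
  also have "(\<lambda>x. (1 / s) * F (0 + (1 / s) * x)) = (\<lambda>x. indicator {0..1} x *\<^sub>R (norm (Wd s f x))\<^sup>2)"
  proof
    fix x :: real
    have "(norm (Wd s f x))\<^sup>2 = indicator {0..s} x / s * (norm (f (x / s)))\<^sup>2"
      unfolding Wd_def using s by (simp add: norm_mult norm_divide power_divide power_mult_distrib indicator_def)
    moreover have "indicator {0..1} x * (indicator {0..s} x :: real) = indicator {0..s} x"
      using s by (auto simp: indicator_def)
    ultimately show "(1 / s) * F (0 + (1 / s) * x) = indicator {0..1} x *\<^sub>R (norm (Wd s f x))\<^sup>2"
      unfolding F_def using ind_scale(1)[OF s(1), of x] by (simp add: field_simps)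
      (metis mult.assoc mult.commute)
  qed
  finally have "set_integrable lborel {0..1} (\<lambda>x. (norm (Wd s f x))\<^sup>2)"
    unfolding set_integrable_def .
  moreover have "Wd s f \<in> borel_measurable borel" unfolding Wd_def by measurable
  ultimately show ?thesis unfolding L2_def by simp
qed

lemma Dl_L2:
  assumes s: "0 < s" "s \<le> 1" and g: "g \<in> L2"
  shows "Dl s g \<in> L2"
proof -
  have gm[measurable]: "g \<in> borel_measurable borel" using g by (simp add: L2_def)
  define G where "G x = indicator {0..s} x * (norm (g x))\<^sup>2" for x :: real
  have "set_integrable lborel {0..s} (\<lambda>x. (norm (g x))\<^sup>2)"
    by (rule set_integrable_subset[OF L2_sq[OF g]]) (use s in auto)
  hence Gi: "integrable lborel G" unfolding G_def set_integrable_def by simp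
  have "integrable lborel (\<lambda>y. G (0 + s * y))"
    using s by (subst lborel_integrable_real_affine_iff) (auto simp: Gi)
  hence "integrable lborel (\<lambda>y. s * G (0 + s * y))" by (rule integrable_mult_right)
  also have "(\<lambda>y. s * G (0 + s * y)) = (\<lambda>y. indicator {0..1} y *\<^sub>R (norm (Dl s g y))\<^sup>2)"
  proof
    fix y :: real
    show "s * G (0 + s * y) = indicator {0..1} y *\<^sub>R (norm (Dl s g y))\<^sup>2"
      unfolding G_def Dl_def using s ind_scale(2)[OF s(1), of y]
      by (simp add: norm_mult power_mult_distrib)
  qed
  finally have "set_integrable lborel {0..1} (\<lambda>x. (norm (Dl s g x))\<^sup>2)"
    unfolding set_integrable_def .
  moreover have "Dl s g \<in> borel_measurable borel" unfolding Dl_def by measurable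
  ultimately show ?thesis unfolding L2_def by simp
qed

lemma Wd_int:
  assumes s: "0 < s" "s \<le> 1" and f: "f \<in> L2" and g: "\<gamma> > 0"
  shows "(LINT x:{0..1}|lborel. Wd s f x * complex_of_real ((\<gamma> + 1) * x powr \<gamma>))
       = complex_of_real (s powr (\<gamma> + 1/2)) * (LINT y:{0..1}|lborel. f y * complex_of_real ((\<gamma> + 1) * y powr \<gamma>))"
proof -
  define F where "F x = indicator {0..1} x *\<^sub>R (Wd s f x * complex_of_real ((\<gamma> + 1) * x powr \<gamma>))" for x :: real
  have sq: "sqrt s > 0" using s by simp
  have pt: "F (0 + s * y) = complex_of_real (s powr \<gamma> / sqrt s) *
        (indicator {0..1} y *\<^sub>R (f y * complex_of_real ((\<gamma> + 1) * y powr \<gamma>)))" for y :: real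
  proof (cases "y \<in> {0..1}")
    case True
    hence "s * y \<in> {0..1}" using s by (auto intro: mult_le_one)
    moreover have "(s * y) powr \<gamma> = s powr \<gamma> * y powr \<gamma>" using s True by (simp add: powr_mult)
    ultimately show ?thesis unfolding F_def Wd_def using True s ind_scale(2)[OF s(1), of y]
      by (simp add: field_simps)
  next
    case False
    thus ?thesis unfolding F_def Wd_def using s ind_scale(2)[OF s(1), of y] by simp
  qed
  have "(LINT x:{0..1}|lborel. Wd s f x * complex_of_real ((\<gamma> + 1) * x powr \<gamma>)) = integral\<^sup>L lborel F"
    unfolding F_def set_lebesgue_integral_def ..
  also have "\<dots> = \<bar>s\<bar> *\<^sub>R integral\<^sup>L lborel (\<lambda>y. F (0 + s * y))"
    using s by (intro lborel_integral_real_affine) auto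
  also have "\<dots> = complex_of_real (s * (s powr \<gamma> / sqrt s)) *
        (LINT y:{0..1}|lborel. f y * complex_of_real ((\<gamma> + 1) * y powr \<gamma>))"
    unfolding pt set_lebesgue_integral_def using s by (simp add: scaleR_conv_of_real)
  also have "s * (s powr \<gamma> / sqrt s) = s powr (\<gamma> + 1/2)"
  proof -
    have h: "sqrt s = s powr (1/2)" using s by (simp add: powr_half_sqrt)
    have hp: "s powr (1/2) > 0" using s by simp
    have ss: "s = s powr (1/2) * s powr (1/2)" using s by (simp add: powr_add[symmetric])
    have "s * (s powr \<gamma> / sqrt s) = s powr (1/2) * s powr \<gamma>"
      unfolding h using hp by (subst (1) ss) (simp add: field_simps)
    also have "\<dots> = s powr (\<gamma> + 1/2)" by (simp add: powr_add)
    finally show ?thesis .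
  qed
  finally show ?thesis .
qed


lemma cnj_of_bool [simp]: "cnj (of_bool P) = of_bool P"
  by (cases P) simp_all

lemma of_real_of_bool [simp]: "complex_of_real (of_bool P) = of_bool P"
  by (cases P) simp_all

lemma Phi_holo: "Phi s holomorphic_on ball 0 1"
proof -
  have "1 - z \<noteq> 0" if "z \<in> ball 0 1" for z :: complex
    using that by auto
  thus ?thesis unfolding Phi_def[abs_def] by (auto intro!: holomorphic_intros)
qed

lemma Phi_real:
  fixes s r :: real
  assumes s: "s > 0" and r: "0 < r" "r < 1"
  shows "Phi s (complex_of_real r) = complex_of_real (s powr (r / (1 - r) + 1/2))"
proof -
  have r1: "1 - r \<noteq> 0" using r by simp
  have "(1 + complex_of_real r) / (1 - complex_of_real r) = complex_of_real ((1 + r) / (1 - r))" by simp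
  hence "Phi s (complex_of_real r) = exp (complex_of_real (ln s / 2 * ((1 + r) / (1 - r))))"
    unfolding Phi_def by simp
  also have "\<dots> = complex_of_real (exp (ln s / 2 * ((1 + r) / (1 - r))))"
    by (simp only: exp_of_real)
  also have "ln s / 2 * ((1 + r) / (1 - r)) = (r / (1 - r) + 1/2) * ln s"
    using r1 by (simp add: field_simps)
  also have "exp ((r / (1 - r) + 1/2) * ln s) = s powr (r / (1 - r) + 1/2)"
    using s by (simp add: powr_def)
  finally show ?thesis .
qed

lemma half_limpt: "complex_of_real (1/2) islimpt (complex_of_real ` {0<..<1})"
  unfolding islimpt_approachable
proof (intro allI impI)
  fix e :: real assume e: "e > 0"
  define r where "r = 1/2 + min (e/2) (1/4)"
  have r: "r \<in> {0<..<1}" "r \<noteq> 1/2" "\<bar>r - 1/2\<bar> < e" using e by (auto simp: r_def)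
  show "\<exists>x'\<in>complex_of_real ` {0<..<1}. x' \<noteq> complex_of_real (1/2) \<and> dist x' (complex_of_real (1/2)) < e"
  proof (rule bexI[of _ "complex_of_real r"])
    have "complex_of_real r \<noteq> complex_of_real (1/2)" by (metis r(2) of_real_eq_iff)
    moreover have "dist (complex_of_real r) (complex_of_real (1/2)) < e"
      using r(3) by (simp only: dist_of_real dist_real_def)
    ultimately show "complex_of_real r \<noteq> complex_of_real (1/2) \<and> dist (complex_of_real r) (complex_of_real (1/2)) < e" ..
    show "complex_of_real r \<in> complex_of_real ` {0<..<1}" using r(1) by blast
  qed
qed

context
  fixes U :: "(real \<Rightarrow> complex) \<Rightarrow> (complex \<Rightarrow> complex)"
  assumes U: "sarason_transform U"
begin

lemma U_Wd:
  assumes s: "0 < s" "s \<le> 1" and f: "f \<in> L2"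
  shows "U (Wd s f) = (\<lambda>z. Phi s z * U f z)"
proof
  fix z :: complex
  have Wf: "Wd s f \<in> L2" by (rule Wd_L2[OF s f])
  define D where "D z = U (Wd s f) z - Phi s z * U f z" for z
  have Dh: "D holomorphic_on ball 0 1"
    unfolding D_def[abs_def] using H2_holo[OF U_H2[OF U Wf]] H2_holo[OF U_H2[OF U f]] Phi_holo
    by (auto intro!: holomorphic_intros)
  have D0: "D w = 0" if "w \<in> complex_of_real ` {0<..<1}" for w
  proof -
    from that obtain r where r0: "r \<in> {0<..<1}" and w: "w = complex_of_real r" by blast
    have r: "0 < r" "r < 1" using r0 by auto
    define \<gamma> where "\<gamma> = r / (1 - r)"
    have g: "\<gamma> > 0" using r by (simp add: \<gamma>_def)
    have gr: "\<gamma> / (\<gamma> + 1) = r" using r by (simp add: \<gamma>_def field_simps)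
    have "U (Wd s f) w = (LINT x:{0..1}|lborel. Wd s f x * complex_of_real ((\<gamma> + 1) * x powr \<gamma>))"
      using U_explicit[OF U Wf g] unfolding gr w .
    also have "\<dots> = complex_of_real (s powr (\<gamma> + 1/2)) * (LINT y:{0..1}|lborel. f y * complex_of_real ((\<gamma> + 1) * y powr \<gamma>))"
      by (rule Wd_int[OF s f g])
    also have "\<dots> = Phi s w * U f w"
    proof -
      have e1: "U f w = (LINT y:{0..1}|lborel. f y * complex_of_real ((\<gamma> + 1) * y powr \<gamma>))"
        using U_explicit[OF U f g] unfolding gr w .
      have e2: "Phi s w = complex_of_real (s powr (\<gamma> + 1/2))"
        using Phi_real[OF s(1) r] unfolding w \<gamma>_def .
      show ?thesis by (simp only: e1 e2)
    qed
    finally show ?thesis unfolding D_def by simp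
  qed
  show "U (Wd s f) z = Phi s z * U f z"
  proof (cases "z \<in> ball 0 1")
    case True
    have "D z = 0"
    proof (rule analytic_continuation[OF Dh open_ball connected_ball _ _ half_limpt D0 True])
      show "complex_of_real ` {0<..<1} \<subseteq> ball 0 1" by auto
      show "complex_of_real (1/2) \<in> ball 0 1" by simp
    qed
    thus ?thesis unfolding D_def by simp
  next
    case False
    thus ?thesis using H2_out[OF U_H2[OF U Wf] False] H2_out[OF U_H2[OF U f] False] by simp
  qed
qed

lemma part1:
  assumes s: "0 < s" "s \<le> 1"
  shows "U ` (Pminus s ` L2) = {h. \<exists>g\<in>H2. h = (\<lambda>z. Phi s z * g z)}"
proof (intro equalityI subsetI)
  fix h assume "h \<in> U ` (Pminus s ` L2)"
  then obtain g where g: "g \<in> L2" and h: "h = U (Pminus s g)" by auto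
  have "h = U (Wd s (Dl s g))" unfolding h Wd_Dl[OF s(1)] ..
  also have "\<dots> = (\<lambda>z. Phi s z * U (Dl s g) z)" by (rule U_Wd[OF s Dl_L2[OF s g]])
  finally show "h \<in> {h. \<exists>g\<in>H2. h = (\<lambda>z. Phi s z * g z)}"
    using U_H2[OF U Dl_L2[OF s g]] by blast
next
  fix h assume "h \<in> {h. \<exists>g\<in>H2. h = (\<lambda>z. Phi s z * g z)}"
  then obtain g where g: "g \<in> H2" and h: "h = (\<lambda>z. Phi s z * g z)" by auto
  obtain f where f: "f \<in> L2" and gf: "g = U f" using U_surj[OF U g] by blast
  have "h = U (Wd s f)" unfolding h gf U_Wd[OF s f] ..
  also have "\<dots> = U (Pminus s (Wd s f))" by (simp only: Wd_Pminus)
  finally show "h \<in> U ` (Pminus s ` L2)" using Wd_L2[OF s f] by blast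
qed

lemma Pplus_L2: "f \<in> L2 \<Longrightarrow> Pplus s f \<in> L2"
  unfolding Pplus_def by (rule L2_mult[of f _ 1]) (auto simp: indicator_def)

lemma Pminus_L2: "f \<in> L2 \<Longrightarrow> Pminus s f \<in> L2"
  unfolding Pminus_def by (rule L2_mult[of f _ 1]) (auto simp: indicator_def)

lemma ip_orth:
  shows "ip (Pplus s a) (Pminus s b) = 0"
proof -
  have "AE x in lborel. indicator {0..1} x *\<^sub>R (Pplus s a x * cnj (Pminus s b x)) = 0"
    using AE_lborel_singleton[of s]
    by eventually_elim (auto simp: Pplus_def Pminus_def indicator_def)
  thus ?thesis unfolding ip_def set_lebesgue_integral_def by (rule integral_eq_zero_AE)
qed

lemma part2:
  assumes s: "0 < s" "s \<le> 1"
  shows "U ` (Pplus s ` L2) = {h \<in> H2. \<forall>g\<in>H2. h2_inner h (\<lambda>z. Phi s z * g z) = 0}"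
proof (intro equalityI subsetI)
  fix h assume "h \<in> U ` (Pplus s ` L2)"
  then obtain a where a: "a \<in> L2" and h: "h = U (Pplus s a)" by auto
  show "h \<in> {h \<in> H2. \<forall>g\<in>H2. h2_inner h (\<lambda>z. Phi s z * g z) = 0}"
  proof (intro CollectI conjI ballI)
    show "h \<in> H2" unfolding h by (rule U_H2[OF U Pplus_L2[OF a]])
    fix g assume g: "g \<in> H2"
    have "(\<lambda>z. Phi s z * g z) \<in> U ` (Pminus s ` L2)" unfolding part1[OF s] using g by blast
    then obtain b where b: "b \<in> L2" and pb: "(\<lambda>z. Phi s z * g z) = U (Pminus s b)" by auto
    show "h2_inner h (\<lambda>z. Phi s z * g z) = 0"
      unfolding h pb U_ip[OF U Pplus_L2[OF a] Pminus_L2[OF b]] by (rule ip_orth)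
  qed
next
  fix h assume "h \<in> {h \<in> H2. \<forall>g\<in>H2. h2_inner h (\<lambda>z. Phi s z * g z) = 0}"
  hence hH: "h \<in> H2" and orth: "\<And>g. g \<in> H2 \<Longrightarrow> h2_inner h (\<lambda>z. Phi s z * g z) = 0" by auto
  obtain a where a: "a \<in> L2" and ha: "h = U a" using U_surj[OF U hH] by blast
  have am[measurable]: "a \<in> borel_measurable borel" using a by (simp add: L2_def)
  have "U (Pminus s a) \<in> {h. \<exists>g\<in>H2. h = (\<lambda>z. Phi s z * g z)}"
    unfolding part1[OF s, symmetric] using a by blast
  then obtain g where g: "g \<in> H2" and pg: "U (Pminus s a) = (\<lambda>z. Phi s z * g z)" by auto
  have "ip a (Pminus s a) = 0"
    using orth[OF g] unfolding pg[symmetric] ha U_ip[OF U a Pminus_L2[OF a]] .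
  hence "(LINT x:{0..1}|lborel. complex_of_real (indicator {0..s} x * (norm (a x))\<^sup>2)) = 0"
    unfolding ip_def Pminus_def
    by (simp add: indicator_def complex_norm_square mult_ac of_real_power[symmetric] del: of_real_power)
  hence I0: "(LINT x:{0..1}|lborel. indicator {0..s} x * (norm (a x))\<^sup>2) = 0"
    unfolding set_integral_complex_of_real by simp
  have Ii: "integrable lborel (\<lambda>x. indicator {0..1} x *\<^sub>R (indicator {0..s} x * (norm (a x))\<^sup>2))"
  proof -
    have "set_integrable lborel {0..1} (\<lambda>x. indicator {0..s} x * (norm (a x))\<^sup>2)"
      using L2_sq[OF a] by (rule set_integrable_bound) (auto simp: set_borel_measurable_def indicator_def intro!: AE_I2)
    thus ?thesis unfolding set_integrable_def .
  qed
  have "AE x in lborel. indicator {0..1} x *\<^sub>R (indicator {0..s} x * (norm (a x))\<^sup>2) = 0"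
    using I0 unfolding set_lebesgue_integral_def
    by (subst integral_nonneg_eq_0_iff_AE[OF Ii, symmetric]) (auto intro!: AE_I2)
  hence ae: "AE x in lborel. x \<in> {0..1} \<longrightarrow> (norm (a x + (-1) * Pplus s a x))\<^sup>2 = 0"
  proof (rule eventually_mono)
    fix x assume x: "indicator {0..1} x *\<^sub>R (indicator {0..s} x * (norm (a x))\<^sup>2) = (0::real)"
    show "x \<in> {0..1} \<longrightarrow> (norm (a x + (-1) * Pplus s a x))\<^sup>2 = 0"
    proof
      assume x1: "x \<in> {0..1}"
      show "(norm (a x + (-1) * Pplus s a x))\<^sup>2 = 0"
      proof (cases "x < s")
        case True
        hence "a x = 0" using x x1 by (auto simp: indicator_def)
        thus ?thesis by (simp add: Pplus_def)
      next
        case False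
        thus ?thesis using x1 by (simp add: Pplus_def indicator_def)
      qed
    qed
  qed
  define d where "d = (\<lambda>x. a x + (-1) * Pplus s a x)"
  have dL: "d \<in> L2" unfolding d_def by (rule L2_lin[OF a Pplus_L2[OF a]])
  have "(LINT x:{0..1}|lborel. (norm (d x))\<^sup>2) = 0"
    unfolding set_lebesgue_integral_def
  proof (rule integral_eq_zero_AE)
    show "AE x in lborel. indicator {0..1} x *\<^sub>R (norm (d x))\<^sup>2 = 0"
      using ae by eventually_elim (auto simp: d_def indicator_def)
  qed
  hence "l2_norm d = 0" unfolding l2_norm_def by simp
  hence "h2_norm (U d) = 0" using U_norm[OF U dL] by simp
  hence "U d = (\<lambda>z. 0)" by (rule H2_zero[OF U_H2[OF U dL]])
  hence "(\<lambda>z. U a z + (-1) * U (Pplus s a) z) = (\<lambda>z. 0)"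
    unfolding d_def U_lin[OF U a Pplus_L2[OF a]] .
  hence "U a = U (Pplus s a)"
    by (intro ext) (metis add_eq_0_iff mult_minus1 minus_minus)
  thus "h \<in> U ` (Pplus s ` L2)" using ha a by blast
qed

end

theorem lemma2p11:
  fixes U :: "(real \<Rightarrow> complex) \<Rightarrow> (complex \<Rightarrow> complex)" and s :: real
  assumes "sarason_transform U" and "0 < s" and "s \<le> 1"
  shows "U ` (Pminus s ` L2) = {h. \<exists>g\<in>H2. h = (\<lambda>z. Phi s z * g z)} \<and>
         U ` (Pplus s ` L2) =
           {h \<in> H2. \<forall>g\<in>H2. h2_inner h (\<lambda>z. Phi s z * g z) = 0}"
  using part1[OF assms] part2[OF assms] by blast


end
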